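(* Consider the three-dimensional stochastic Maxwell equations with multiplicative noise written in the stochastic Hamiltonian form $$\mathbf{K}\,{\rm d}_{t}\mathcal{E}+\mathbf{L}_{1}\mathcal{E}_{x}{\rm d}t+\mathbf{L}_{2}\mathcal{E}_{y}{\rm d}t+\mathbf{L}_{3}\mathcal{E}_{z}{\rm d}t=\nabla S(\mathcal{E})\circ{\rm d}W(t),$$ and the stochastic Runge-Kutta method described in the context, with temporal coefficients $(a_{kj},b_k)_{k,j=1}^r$ and spatial coefficients $(\widetilde{a}_{mn},\widetilde{b}_m)_{m,n=1}^s$ in $x$, $(\overline{a}_{pq},\overline{b}_p)_{p,q=1}^\iota$ in $y$, $(\widehat{a}_{lv},\widehat{b}_l)_{l,v=1}^\sigma$ in $z$. Assume $$b_kb_j-b_ka_{kj}-b_ja_{jk}=0,\quad \overline{b}_p\overline{b}_q-\overline{b}_p\overline{a}_{pq}-\overline{b}_q\overline a_{qp}=0,$$ $$\widetilde{b}_m\widetilde{b}_n-\widetilde{b}_m\widetilde{a}_{mn}-\widetilde{b}_n\widetilde{a}_{nm}=0,\quad \widehat{b}_l\widehat{b}_v-\widehat{b}_l\widehat{a}_{lv}-\widehat{b}_v\widehat{a}_{vl}=0$$ for all $k,j=1,\dots,r$, $m,n=1,\dots,s$, $p,q=1,\dots,\iota$, $l,v=1,\dots,\sigma$. Then the method satisfies, almost surely, the discrete stochastic multi-symplectic conservation law $$\frac{\omega^{\rho+1}-\omega^{\rho}}{\tau}+\frac{\kappa_{i_1+1}^{(1)}-\kappa_{i_1}^{(1)}}{\Delta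 x}+\frac{\kappa_{i_2+1}^{(2)}-\kappa_{i_2}^{(2)}}{\Delta y}+\frac{\kappa_{i_3+1}^{(3)}-\kappa_{i_3}^{(3)}}{\Delta z}=0,$$ where $\omega^\rho=\frac{1}{2}\sum_{m=1}^{s}\sum_{p=1}^{\iota}\sum_{l=1}^{\sigma}\widetilde{b}_m\overline{b}_p\widehat{b}_l\,{\rm d}\mathcal{E}_{mpl}^{\rho}\wedge \mathbf{K}{\rm d}\mathcal{E}_{mpl}^{\rho}$, $\kappa_{i_1}^{(1)}=\frac{1}{2}\sum_{k=1}^{r}\sum_{p=1}^{\iota}\sum_{l=1}^{\sigma}b_k\overline{b}_p\widehat{b}_l\,{\rm d}\mathcal{E}_{i_1 pl}^{k}\wedge \mathbf{L}_1{\rm d}\mathcal{E}_{i_1 pl}^{k}$, $\kappa_{i_2}^{(2)}=\frac{1}{2}\sum_{k=1}^{r}\sum_{m=1}^{s}\sum_{l=1}^{\sigma}b_k\widetilde{b}_m\widehat{b}_l\,{\rm d}\mathcal{E}_{mi_2 l}^{k}\wedge \mathbf{L}_2{\rm d}\mathcal{E}_{mi_2 l}^{k}$, $\kappa_{i_3}^{(3)}=\frac{1}{2}\sum_{k=1}^{r}\sum_{m=1}^{s}\sum_{p=1}^{\iota}b_k\widetilde{b}_m\overline{b}_p\,{\rm d}\mathcal{E}_{mpi_3}^{k}\wedge \mathbf{L}_3{\rm d}\mathcal{E}_{mpi_3}^{k}$.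
   Context: $\mathcal{E}=(H^T,E^T)^T\in\mathbb{R}^6$ with $H=(H_1,H_2,H_3)$, $E=(E_1,E_2,E_3)$; $S(\mathcal{E})=\frac{\lambda}{2}(|E_1|^2+|E_2|^2+|E_3|^2+|H_1|^2+|H_2|^2+|H_3|^2)$ for a real constant $\lambda$; $\mathbf{K}=\begin{pmatrix}0&-I_3\\ I_3&0\end{pmatrix}$, $\mathbf{L}_i=\begin{pmatrix}\mathcal{D}_i&0\\0&\mathcal{D}_i\end{pmatrix}$ with $\mathcal{D}_1=\begin{pmatrix}0&0&0\\0&0&-1\\0&1&0\end{pmatrix}$, $\mathcal{D}_2=\begin{pmatrix}0&0&1\\0&0&0\\-1&0&0\end{pmatrix}$, $\mathcal{D}_3=\begin{pmatrix}0&-1&0\\1&0&0\\0&0&0\end{pmatrix}$. $W$ is a $Q$-Wiener process and the equation is in the Stratonovich sense. The method, with time step $\tau$ and space steps $\Delta x,\Delta y,\Delta z$, has on each space-time cell stage values $\Upsilon_{mplk}\in\mathbb{R}^6$, discrete derivatives $\delta_t\Upsilon_{mplk},\delta_x\Upsilon_{mplk},\delta_y\Upsilon_{mplk},\delta_z\Upsilon_{mplk}$, time-level values $\mathcal{E}^\rho_{mpl},\mathcal{E}^{\rho+1}_{mpl}$, and face values $\mathcal{E}^k_{i_1pl},\mathcal{E}^k_{(i_1+1)pl}$, $\mathcal{E}^k_{mi_2l},\mathcal{E}^k_{m(i_2+1)l}$, $\mathcal{E}^k_{mpi_3},\mathcal{E}^k_{mp(i_3+1)}$, related by $\Upsilon_{mplk}=\mathcal{E}_{mpl}^{\rho}+\tau\sum_{j}a_{kj}\delta_t\Upsilon_{mplj}$,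 $\mathcal{E}_{mpl}^{\rho+1}=\mathcal{E}_{mpl}^{\rho}+\tau\sum_{k}b_{k}\delta_t\Upsilon_{mplk}$, $\Upsilon_{mplk}=\mathcal{E}_{i_1pl}^{k}+\Delta x\sum_{n}\widetilde{a}_{mn}\delta_{x}\Upsilon_{nplk}$, $\mathcal{E}_{(i_1+1)pl}^{k}=\mathcal{E}_{i_1pl}^{k}+\Delta x\sum_{m}\widetilde{b}_{m}\delta_{x}\Upsilon_{mplk}$, $\Upsilon_{mplk}=\mathcal{E}_{mi_2l}^{k}+\Delta y\sum_{q}\overline{a}_{pq}\delta_{y}\Upsilon_{mqlk}$, $\mathcal{E}_{m(i_{2}+1)l}^{k}=\mathcal{E}_{mi_2l}^{k}+\Delta y\sum_{p}\overline{b}_{p}\delta_{y}\Upsilon_{mplk}$, $\Upsilon_{mplk}=\mathcal{E}_{mpi_3}^{k}+\Delta z\sum_{v}\widehat{a}_{lv}\delta_{z}\Upsilon_{mpvk}$, $\mathcal{E}_{mp(i_3+1)}^{k}=\mathcal{E}_{mpi_3}^{k}+\Delta z\sum_{u}\widehat{b}_{u}\delta_{z}\Upsilon_{mpuk}$, $\tau\mathbf{K}\delta_{t}\Upsilon_{mplk}+\tau\sum_{i=1}^3\mathbf{L}_{i}\delta_{x_i}\Upsilon_{mplk}=\nabla S(\Upsilon_{mplk})\Delta W$, where $(\delta_{x_1},\delta_{x_2},\delta_{x_3})=(\delta_x,\delta_y,\delta_z)$ and $\Delta W$ is the real-valued Wiener increment over the time step at the corresponding stage point. ${\rm d}$ is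 the exterior differential in phase space and ${\rm d}\mathcal{E}\wedge\mathbf{M}{\rm d}\mathcal{E}=\sum_{a,b}\mathbf{M}_{ab}{\rm d}\mathcal{E}_a\wedge{\rm d}\mathcal{E}_b$. *)

theory Defs
  imports "HOL-Analysis.Analysis"
begin

text \<open>State vector E = (H1,H2,H3,E1,E2,E3) in R^6; components indexed 1..6 (via vector).\<close>

definition Kmat :: "real^6^6" where
  "Kmat = vector [vector [0,0,0,-1,0,0], vector [0,0,0,0,-1,0], vector [0,0,0,0,0,-1],
                  vector [1,0,0,0,0,0],  vector [0,1,0,0,0,0],  vector [0,0,1,0,0,0]]"

text \<open>L_i = diag(D_i, D_i).\<close>
definition L1mat :: "real^6^6" where
  "L1mat = vector [vector [0,0,0,0,0,0], vector [0,0,-1,0,0,0], vector [0,1,0,0,0,0],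
                   vector [0,0,0,0,0,0], vector [0,0,0,0,0,-1], vector [0,0,0,0,1,0]]"

definition L2mat :: "real^6^6" where
  "L2mat = vector [vector [0,0,1,0,0,0],  vector [0,0,0,0,0,0], vector [-1,0,0,0,0,0],
                   vector [0,0,0,0,0,1],  vector [0,0,0,0,0,0], vector [0,0,0,-1,0,0]]"

definition L3mat :: "real^6^6" where
  "L3mat = vector [vector [0,-1,0,0,0,0], vector [1,0,0,0,0,0], vector [0,0,0,0,0,0],
                   vector [0,0,0,0,-1,0], vector [0,0,0,1,0,0], vector [0,0,0,0,0,0]]"

definition Sfun :: "real \<Rightarrow> real^6 \<Rightarrow> real" where
  "Sfun lam E = lam / 2 * (\<Sum>i\<in>UNIV. (E $ i)^2)"

definition gradS :: "real \<Rightarrow> real^6 \<Rightarrow> real^6" where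
  "gradS lam E = lam *\<^sub>R E"

lemma gradS_is_gradient:
  "(Sfun lam has_derivative (\<lambda>h. gradS lam E \<bullet> h)) (at E)"
proof -
  have "(Sfun lam has_derivative (\<lambda>h. lam / 2 * (\<Sum>i\<in>UNIV. 2 * (E $ i) * (h $ i)))) (at E)"
    unfolding Sfun_def
    by (auto intro!: derivative_eq_intros bounded_linear.has_derivative[OF bounded_linear_vec_nth] ext sum.cong simp: power2_eq_square algebra_simps)
  moreover have "(\<lambda>h. lam / 2 * (\<Sum>i\<in>UNIV. 2 * (E $ i) * (h $ i))) = (\<lambda>h. gradS lam E \<bullet> h)"
    by (auto simp: gradS_def inner_vec_def sum_distrib_left algebra_simps intro!: ext sum.cong)
  ultimately show ?thesis by simp
qed

text \<open>The 2-form dU \<and> M dU (dU the differential, a linear map from the tangent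
  space of phase space to R^6), evaluated on the tangent vectors u, v, with
  dU_a \<and> dU_b (u,v) = dU_a(u) dU_b(v) - dU_a(v) dU_b(u).\<close>
definition wedge2 :: "real^6^6 \<Rightarrow> ('a \<Rightarrow> real^6) \<Rightarrow> 'a \<Rightarrow> 'a \<Rightarrow> real" where
  "wedge2 M dU u v = (\<Sum>a\<in>UNIV. \<Sum>b\<in>UNIV. M $ a $ b * (dU u $ a * dU v $ b - dU v $ a * dU u $ b))"

end

theory Submission
  imports Defs
begin

lemma exhaust_6:
  fixes x :: 6
  shows "x = 1 \<or> x = 2 \<or> x = 3 \<or> x = 4 \<or> x = 5 \<or> x = 6"
proof (induct x)
  case (of_int z)
  then have "z = 0 \<or> z = 1 \<or> z = 2 \<or> z = 3 \<or> z = 4 \<or> z = 5" by fastforce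
  then show ?case by auto
qed
lemma forall_6: "(\<forall>i::6. P i) \<longleftrightarrow> P 1 \<and> P 2 \<and> P 3 \<and> P 4 \<and> P 5 \<and> P 6"
  by (metis exhaust_6)
lemma K_anti: "\<forall>i j. Kmat $ i $ j = - Kmat $ j $ i"
  unfolding forall_6 Kmat_def by (simp add: vector_def)
lemma L1_anti: "\<forall>i j. L1mat $ i $ j = - L1mat $ j $ i"
  unfolding forall_6 L1mat_def by (simp add: vector_def)
lemma L2_anti: "\<forall>i j. L2mat $ i $ j = - L2mat $ j $ i"
  unfolding forall_6 L2mat_def by (simp add: vector_def)
lemma L3_anti: "\<forall>i j. L3mat $ i $ j = - L3mat $ j $ i"
  unfolding forall_6 L3mat_def by (simp add: vector_def)
lemma wedge2_anti:
  assumes "\<forall>i j. M $ i $ j = - M $ j $ i"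
  shows "wedge2 M dU u v = 2 * (dU u \<bullet> (M *v dU v))"
proof -
  have "(\<Sum>a\<in>UNIV. \<Sum>b\<in>UNIV. M $ a $ b * (dU v $ a * dU u $ b))
      = (\<Sum>b\<in>UNIV. \<Sum>a\<in>UNIV. M $ a $ b * (dU v $ a * dU u $ b))" by (rule sum.swap)
  also have "... = - (\<Sum>a\<in>UNIV. \<Sum>b\<in>UNIV. M $ a $ b * (dU u $ a * dU v $ b))"
    unfolding sum_negf[symmetric]
  proof (intro sum.cong refl)
    fix a b
    show "M $ b $ a * (dU v $ b * dU u $ a) = - (M $ a $ b * (dU u $ a * dU v $ b))"
      using assms[rule_format, of b a] by simp
  qed
  finally have h: "(\<Sum>a\<in>UNIV. \<Sum>b\<in>UNIV. M $ a $ b * (dU v $ a * dU u $ b)) = - (\<Sum>a\<in>UNIV. \<Sum>b\<in>UNIV. M $ a $ b * (dU u $ a * dU v $ b))" .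
  have "wedge2 M dU u v = (\<Sum>a\<in>UNIV. \<Sum>b\<in>UNIV. M $ a $ b * (dU u $ a * dU v $ b)) - (\<Sum>a\<in>UNIV. \<Sum>b\<in>UNIV. M $ a $ b * (dU v $ a * dU u $ b))"
    unfolding wedge2_def by (simp add: right_diff_distrib sum_subtractf)
  also have "... = 2 * (\<Sum>a\<in>UNIV. \<Sum>b\<in>UNIV. M $ a $ b * (dU u $ a * dU v $ b))" using h by simp
  also have "... = 2 * (dU u \<bullet> (M *v dU v))"
    by (simp add: inner_vec_def matrix_vector_mult_def sum_distrib_left algebra_simps)
  finally show ?thesis .
qed

lemma rk_sym:
  fixes T :: "real^6 \<Rightarrow> real^6" and g g' y y' :: "nat \<Rightarrow> real^6"
  assumes lin: "linear T"
    and cond: "\<And>k j. k \<in> {1..r} \<Longrightarrow> j \<in> {1..r} \<Longrightarrow> b k * b j - b k * a k j - b j * a j k = 0"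
    and e1: "e1 = e0 + h *\<^sub>R (\<Sum>k\<in>{1..r}. b k *\<^sub>R g k)"
    and f1: "f1 = f0 + h *\<^sub>R (\<Sum>k\<in>{1..r}. b k *\<^sub>R g' k)"
    and y: "\<And>k. k \<in> {1..r} \<Longrightarrow> y k = e0 + h *\<^sub>R (\<Sum>j\<in>{1..r}. a k j *\<^sub>R g j)"
    and y': "\<And>k. k \<in> {1..r} \<Longrightarrow> y' k = f0 + h *\<^sub>R (\<Sum>j\<in>{1..r}. a k j *\<^sub>R g' j)"
  shows "e1 \<bullet> T f1 - e0 \<bullet> T f0 = h * (\<Sum>k\<in>{1..r}. b k * (g k \<bullet> T (y' k) + y k \<bullet> T (g' k)))"
proof -
  define c where "c k j = g k \<bullet> T (g' j)" for k j
  note L = linear_add[OF lin] linear_scale[OF lin] linear_sum[OF lin]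
  have A: "e1 \<bullet> T f1 = e0 \<bullet> T f0 + h * (\<Sum>k\<in>{1..r}. b k * (g k \<bullet> T f0))
     + h * (\<Sum>k\<in>{1..r}. b k * (e0 \<bullet> T (g' k)))
     + h * h * (\<Sum>k\<in>{1..r}. \<Sum>j\<in>{1..r}. b k * b j * c k j)"
    unfolding e1 f1 c_def
    apply (simp add: L inner_add_left inner_add_right inner_sum_left inner_sum_right
        sum_distrib_left algebra_simps sum.distrib)
    apply (subst sum.swap)
    apply (simp add: mult.left_commute)
    done
  have B: "\<And>k. k \<in> {1..r} \<Longrightarrow> g k \<bullet> T (y' k) + y k \<bullet> T (g' k) =
      g k \<bullet> T f0 + e0 \<bullet> T (g' k) + h * (\<Sum>j\<in>{1..r}. a k j * c k j)
      + h * (\<Sum>j\<in>{1..r}. a k j * c j k)"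
    unfolding c_def using y y'
    by (simp add: L inner_add_left inner_add_right inner_sum_left inner_sum_right
        sum_distrib_left algebra_simps)
  have sw: "(\<Sum>k\<in>{1..r}. \<Sum>j\<in>{1..r}. b k * a k j * c j k) = (\<Sum>k\<in>{1..r}. \<Sum>j\<in>{1..r}. b j * a j k * c k j)"
    by (rule sum.swap)
  have Z: "(\<Sum>k\<in>{1..r}. \<Sum>j\<in>{1..r}. (b k * b j - b k * a k j - b j * a j k) * c k j) = 0"
    using cond by simp
  have "h * (\<Sum>k\<in>{1..r}. b k * (g k \<bullet> T (y' k) + y k \<bullet> T (g' k)))
     = h * (\<Sum>k\<in>{1..r}. b k * (g k \<bullet> T f0)) + h * (\<Sum>k\<in>{1..r}. b k * (e0 \<bullet> T (g' k)))
       + h * h * (\<Sum>k\<in>{1..r}. \<Sum>j\<in>{1..r}. b k * a k j * c k j)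
       + h * h * (\<Sum>k\<in>{1..r}. \<Sum>j\<in>{1..r}. b k * a k j * c j k)"
  proof -
    have "(\<Sum>k\<in>{1..r}. b k * (g k \<bullet> T (y' k) + y k \<bullet> T (g' k))) = (\<Sum>k\<in>{1..r}. b k * (g k \<bullet> T f0 + e0 \<bullet> T (g' k) + h * (\<Sum>j\<in>{1..r}. a k j * c k j)
      + h * (\<Sum>j\<in>{1..r}. a k j * c j k)))" by (rule sum.cong) (simp_all add: B)
    then show ?thesis by (simp add: sum.distrib sum_distrib_left algebra_simps)
  qed
  also have "... = h * (\<Sum>k\<in>{1..r}. b k * (g k \<bullet> T f0)) + h * (\<Sum>k\<in>{1..r}. b k * (e0 \<bullet> T (g' k)))
       + h * h * (\<Sum>k\<in>{1..r}. \<Sum>j\<in>{1..r}. b k * b j * c k j)"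
  proof -
    have "(\<Sum>k\<in>{1..r}. \<Sum>j\<in>{1..r}. b k * b j * c k j) = (\<Sum>k\<in>{1..r}. \<Sum>j\<in>{1..r}. b k * a k j * c k j) + (\<Sum>k\<in>{1..r}. \<Sum>j\<in>{1..r}. b j * a j k * c k j)"
      using Z by (simp add: left_diff_distrib sum_subtractf sum.distrib)
    then show ?thesis using sw by (simp add: algebra_simps)
  qed
  finally show ?thesis using A by simp
qed
lemma inner_anti:
  fixes M :: "real^6^6"
  assumes "\<forall>i j. M $ i $ j = - M $ j $ i"
  shows "x \<bullet> (M *v y) = - (y \<bullet> (M *v x))"
proof -
  have "x \<bullet> (M *v y) = (\<Sum>a\<in>UNIV. \<Sum>b\<in>UNIV. x $ a * (M $ a $ b * y $ b))"
    by (simp add: inner_vec_def matrix_vector_mult_def sum_distrib_left)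
  also have "... = (\<Sum>b\<in>UNIV. \<Sum>a\<in>UNIV. x $ a * (M $ a $ b * y $ b))" by (rule sum.swap)
  also have "... = (\<Sum>b\<in>UNIV. \<Sum>a\<in>UNIV. - (y $ b * (M $ b $ a * x $ a)))"
  proof (intro sum.cong refl)
    fix a b
    show "x $ a * (M $ a $ b * y $ b) = - (y $ b * (M $ b $ a * x $ a))"
      using assms[rule_format, of a b] by simp
  qed
  also have "... = - (y \<bullet> (M *v x))"
    by (simp add: inner_vec_def matrix_vector_mult_def sum_distrib_left sum_negf)
  finally show ?thesis .
qed

lemma half_diff:
  fixes A B t X :: real
  assumes "A - B = 2 * t * X" "t > 0"
  shows "((1/2) * A - (1/2) * B) / t = X"
proof -
  have "(1/2) * A - (1/2) * B = t * X" using assms(1) by (simp add: algebra_simps)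
  then show ?thesis using assms(2) by simp
qed

lemma mv3:
  "(\<Sum>a\<in>A. \<Sum>b\<in>B. \<Sum>c\<in>C. F a b c) = (\<Sum>b\<in>B. \<Sum>c\<in>C. \<Sum>a\<in>A. F a b c)"
proof -
  have "(\<Sum>a\<in>A. \<Sum>b\<in>B. \<Sum>c\<in>C. F a b c) = (\<Sum>b\<in>B. \<Sum>a\<in>A. \<Sum>c\<in>C. F a b c)" by (rule sum.swap)
  also have "... = (\<Sum>b\<in>B. \<Sum>c\<in>C. \<Sum>a\<in>A. F a b c)" by (intro sum.cong refl sum.swap)
  finally show ?thesis .
qed

theorem mainTheorem2:
  fixes r s io sg :: nat
    and a :: "nat \<Rightarrow> nat \<Rightarrow> real" and b :: "nat \<Rightarrow> real"
    and atl :: "nat \<Rightarrow> nat \<Rightarrow> real" and bt :: "nat \<Rightarrow> real"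
    and ab :: "nat \<Rightarrow> nat \<Rightarrow> real" and bb :: "nat \<Rightarrow> real"
    and ah :: "nat \<Rightarrow> nat \<Rightarrow> real" and bh :: "nat \<Rightarrow> real"
    and tau dx dy dz lam :: real
    and dW :: "nat \<Rightarrow> nat \<Rightarrow> nat \<Rightarrow> nat \<Rightarrow> real"
    and Y Dt Dx Dy Dz :: "nat \<Rightarrow> nat \<Rightarrow> nat \<Rightarrow> nat \<Rightarrow> 'a::real_normed_vector \<Rightarrow> real^6"
    and E0 E1 :: "nat \<Rightarrow> nat \<Rightarrow> nat \<Rightarrow> 'a \<Rightarrow> real^6"
    and X0 X1 :: "nat \<Rightarrow> nat \<Rightarrow> nat \<Rightarrow> 'a \<Rightarrow> real^6"
    and W0 W1 :: "nat \<Rightarrow> nat \<Rightarrow> nat \<Rightarrow> 'a \<Rightarrow> real^6"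
    and Z0 Z1 :: "nat \<Rightarrow> nat \<Rightarrow> nat \<Rightarrow> 'a \<Rightarrow> real^6"
    and dY dDt dDx dDy dDz :: "nat \<Rightarrow> nat \<Rightarrow> nat \<Rightarrow> nat \<Rightarrow> 'a \<Rightarrow> real^6"
    and dE0 dE1 dX0 dX1 dW0 dW1 dZ0 dZ1 :: "nat \<Rightarrow> nat \<Rightarrow> nat \<Rightarrow> 'a \<Rightarrow> real^6"
    and \<zeta>0 :: 'a
  assumes tau_pos: "tau > 0" and dx_pos: "dx > 0" and dy_pos: "dy > 0" and dz_pos: "dz > 0"
    \<comment> \<open>symplecticity conditions on the four sets of Runge-Kutta coefficients\<close>
    and cond_t: "\<And>k j. k \<in> {1..r} \<Longrightarrow> j \<in> {1..r} \<Longrightarrow> b k * b j - b k * a k j - b j * a j k = 0"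
    and cond_y: "\<And>p q. p \<in> {1..io} \<Longrightarrow> q \<in> {1..io} \<Longrightarrow> bb p * bb q - bb p * ab p q - bb q * ab q p = 0"
    and cond_x: "\<And>m n. m \<in> {1..s} \<Longrightarrow> n \<in> {1..s} \<Longrightarrow> bt m * bt n - bt m * atl m n - bt n * atl n m = 0"
    and cond_z: "\<And>l v. l \<in> {1..sg} \<Longrightarrow> v \<in> {1..sg} \<Longrightarrow> bh l * bh v - bh l * ah l v - bh v * ah v l = 0"
    \<comment> \<open>the scheme on one space-time cell, holding at every point \<zeta> of phase space\<close>
    and rk_t_stage: "\<And>\<zeta> m p l k. m \<in> {1..s} \<Longrightarrow> p \<in> {1..io} \<Longrightarrow> l \<in> {1..sg} \<Longrightarrow> k \<in> {1..r} \<Longrightarrow>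
        Y m p l k \<zeta> = E0 m p l \<zeta> + tau *\<^sub>R (\<Sum>j\<in>{1..r}. a k j *\<^sub>R Dt m p l j \<zeta>)"
    and rk_t_update: "\<And>\<zeta> m p l. m \<in> {1..s} \<Longrightarrow> p \<in> {1..io} \<Longrightarrow> l \<in> {1..sg} \<Longrightarrow>
        E1 m p l \<zeta> = E0 m p l \<zeta> + tau *\<^sub>R (\<Sum>k\<in>{1..r}. b k *\<^sub>R Dt m p l k \<zeta>)"
    and rk_x_stage: "\<And>\<zeta> m p l k. m \<in> {1..s} \<Longrightarrow> p \<in> {1..io} \<Longrightarrow> l \<in> {1..sg} \<Longrightarrow> k \<in> {1..r} \<Longrightarrow>
        Y m p l k \<zeta> = X0 p l k \<zeta> + dx *\<^sub>R (\<Sum>n\<in>{1..s}. atl m n *\<^sub>R Dx n p l k \<zeta>)"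
    and rk_x_update: "\<And>\<zeta> p l k. p \<in> {1..io} \<Longrightarrow> l \<in> {1..sg} \<Longrightarrow> k \<in> {1..r} \<Longrightarrow>
        X1 p l k \<zeta> = X0 p l k \<zeta> + dx *\<^sub>R (\<Sum>m\<in>{1..s}. bt m *\<^sub>R Dx m p l k \<zeta>)"
    and rk_y_stage: "\<And>\<zeta> m p l k. m \<in> {1..s} \<Longrightarrow> p \<in> {1..io} \<Longrightarrow> l \<in> {1..sg} \<Longrightarrow> k \<in> {1..r} \<Longrightarrow>
        Y m p l k \<zeta> = W0 m l k \<zeta> + dy *\<^sub>R (\<Sum>q\<in>{1..io}. ab p q *\<^sub>R Dy m q l k \<zeta>)"
    and rk_y_update: "\<And>\<zeta> m l k. m \<in> {1..s} \<Longrightarrow> l \<in> {1..sg} \<Longrightarrow> k \<in> {1..r} \<Longrightarrow>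
        W1 m l k \<zeta> = W0 m l k \<zeta> + dy *\<^sub>R (\<Sum>p\<in>{1..io}. bb p *\<^sub>R Dy m p l k \<zeta>)"
    and rk_z_stage: "\<And>\<zeta> m p l k. m \<in> {1..s} \<Longrightarrow> p \<in> {1..io} \<Longrightarrow> l \<in> {1..sg} \<Longrightarrow> k \<in> {1..r} \<Longrightarrow>
        Y m p l k \<zeta> = Z0 m p k \<zeta> + dz *\<^sub>R (\<Sum>v\<in>{1..sg}. ah l v *\<^sub>R Dz m p v k \<zeta>)"
    and rk_z_update: "\<And>\<zeta> m p k. m \<in> {1..s} \<Longrightarrow> p \<in> {1..io} \<Longrightarrow> k \<in> {1..r} \<Longrightarrow>
        Z1 m p k \<zeta> = Z0 m p k \<zeta> + dz *\<^sub>R (\<Sum>u\<in>{1..sg}. bh u *\<^sub>R Dz m p u k \<zeta>)"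
    and stage_eq: "\<And>\<zeta> m p l k. m \<in> {1..s} \<Longrightarrow> p \<in> {1..io} \<Longrightarrow> l \<in> {1..sg} \<Longrightarrow> k \<in> {1..r} \<Longrightarrow>
        tau *\<^sub>R (Kmat *v Dt m p l k \<zeta>)
        + tau *\<^sub>R (L1mat *v Dx m p l k \<zeta> + L2mat *v Dy m p l k \<zeta> + L3mat *v Dz m p l k \<zeta>)
        = dW m p l k *\<^sub>R gradS lam (Y m p l k \<zeta>)"
    \<comment> \<open>differentials (exterior derivatives in phase space) at the point \<zeta>0\<close>
    and dif_Y: "\<And>m p l k. m \<in> {1..s} \<Longrightarrow> p \<in> {1..io} \<Longrightarrow> l \<in> {1..sg} \<Longrightarrow> k \<in> {1..r} \<Longrightarrow>
        (Y m p l k has_derivative dY m p l k) (at \<zeta>0) \<and>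
        (Dt m p l k has_derivative dDt m p l k) (at \<zeta>0) \<and>
        (Dx m p l k has_derivative dDx m p l k) (at \<zeta>0) \<and>
        (Dy m p l k has_derivative dDy m p l k) (at \<zeta>0) \<and>
        (Dz m p l k has_derivative dDz m p l k) (at \<zeta>0)"
    and dif_E: "\<And>m p l. m \<in> {1..s} \<Longrightarrow> p \<in> {1..io} \<Longrightarrow> l \<in> {1..sg} \<Longrightarrow>
        (E0 m p l has_derivative dE0 m p l) (at \<zeta>0) \<and> (E1 m p l has_derivative dE1 m p l) (at \<zeta>0)"
    and dif_X: "\<And>p l k. p \<in> {1..io} \<Longrightarrow> l \<in> {1..sg} \<Longrightarrow> k \<in> {1..r} \<Longrightarrow>
        (X0 p l k has_derivative dX0 p l k) (at \<zeta>0) \<and> (X1 p l k has_derivative dX1 p l k) (at \<zeta>0)"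
    and dif_W: "\<And>m l k. m \<in> {1..s} \<Longrightarrow> l \<in> {1..sg} \<Longrightarrow> k \<in> {1..r} \<Longrightarrow>
        (W0 m l k has_derivative dW0 m l k) (at \<zeta>0) \<and> (W1 m l k has_derivative dW1 m l k) (at \<zeta>0)"
    and dif_Z: "\<And>m p k. m \<in> {1..s} \<Longrightarrow> p \<in> {1..io} \<Longrightarrow> k \<in> {1..r} \<Longrightarrow>
        (Z0 m p k has_derivative dZ0 m p k) (at \<zeta>0) \<and> (Z1 m p k has_derivative dZ1 m p k) (at \<zeta>0)"
  shows "\<forall>u v.
    ((1/2) * (\<Sum>m\<in>{1..s}. \<Sum>p\<in>{1..io}. \<Sum>l\<in>{1..sg}. bt m * bb p * bh l * wedge2 Kmat (dE1 m p l) u v)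
     - (1/2) * (\<Sum>m\<in>{1..s}. \<Sum>p\<in>{1..io}. \<Sum>l\<in>{1..sg}. bt m * bb p * bh l * wedge2 Kmat (dE0 m p l) u v)) / tau
  + ((1/2) * (\<Sum>k\<in>{1..r}. \<Sum>p\<in>{1..io}. \<Sum>l\<in>{1..sg}. b k * bb p * bh l * wedge2 L1mat (dX1 p l k) u v)
     - (1/2) * (\<Sum>k\<in>{1..r}. \<Sum>p\<in>{1..io}. \<Sum>l\<in>{1..sg}. b k * bb p * bh l * wedge2 L1mat (dX0 p l k) u v)) / dx
  + ((1/2) * (\<Sum>k\<in>{1..r}. \<Sum>m\<in>{1..s}. \<Sum>l\<in>{1..sg}. b k * bt m * bh l * wedge2 L2mat (dW1 m l k) u v)
     - (1/2) * (\<Sum>k\<in>{1..r}. \<Sum>m\<in>{1..s}. \<Sum>l\<in>{1..sg}. b k * bt m * bh l * wedge2 L2mat (dW0 m l k) u v)) / dy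
  + ((1/2) * (\<Sum>k\<in>{1..r}. \<Sum>m\<in>{1..s}. \<Sum>p\<in>{1..io}. b k * bt m * bb p * wedge2 L3mat (dZ1 m p k) u v)
     - (1/2) * (\<Sum>k\<in>{1..r}. \<Sum>m\<in>{1..s}. \<Sum>p\<in>{1..io}. b k * bt m * bb p * wedge2 L3mat (dZ0 m p k) u v)) / dz
  = 0" (is "\<forall>u v. ?P u v")
proof (intro allI)
  fix u v :: 'a
  note lin = matrix_vector_mul_linear
  have dDt_i: "(Dt m p l k has_derivative dDt m p l k) (at \<zeta>0)" "(Dx m p l k has_derivative dDx m p l k) (at \<zeta>0)"
    "(Dy m p l k has_derivative dDy m p l k) (at \<zeta>0)" "(Dz m p l k has_derivative dDz m p l k) (at \<zeta>0)"
    "(Y m p l k has_derivative dY m p l k) (at \<zeta>0)"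
    if "m \<in> {1..s}" "p \<in> {1..io}" "l \<in> {1..sg}" "k \<in> {1..r}" for m p l k
    using dif_Y[OF that] by blast+
  have dYt: "dY m p l k h = dE0 m p l h + tau *\<^sub>R (\<Sum>j\<in>{1..r}. a k j *\<^sub>R dDt m p l j h)"
    if i: "m \<in> {1..s}" "p \<in> {1..io}" "l \<in> {1..sg}" "k \<in> {1..r}" for m p l k h
  proof -
    have D: "((\<lambda>\<zeta>. E0 m p l \<zeta> + tau *\<^sub>R (\<Sum>j\<in>{1..r}. a k j *\<^sub>R Dt m p l j \<zeta>)) has_derivative
        (\<lambda>h. dE0 m p l h + tau *\<^sub>R (\<Sum>j\<in>{1..r}. a k j *\<^sub>R dDt m p l j h))) (at \<zeta>0)"
      using dif_E[OF i(1-3)] dDt_i(1)[OF i(1-3)]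
      by (intro has_derivative_add has_derivative_scaleR_right has_derivative_sum) auto
    have Yeq: "Y m p l k = (\<lambda>\<zeta>. E0 m p l \<zeta> + tau *\<^sub>R (\<Sum>j\<in>{1..r}. a k j *\<^sub>R Dt m p l j \<zeta>))"
      using rk_t_stage[OF i] by (intro ext) auto
    have "dY m p l k = (\<lambda>h. dE0 m p l h + tau *\<^sub>R (\<Sum>j\<in>{1..r}. a k j *\<^sub>R dDt m p l j h))"
      by (rule has_derivative_unique[OF dDt_i(5)[OF i] D[folded Yeq]])
    then show ?thesis by simp
  qed
  have dE1: "dE1 m p l h = dE0 m p l h + tau *\<^sub>R (\<Sum>k\<in>{1..r}. b k *\<^sub>R dDt m p l k h)"
    if i: "m \<in> {1..s}" "p \<in> {1..io}" "l \<in> {1..sg}" for m p l h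
  proof -
    have D: "((\<lambda>\<zeta>. E0 m p l \<zeta> + tau *\<^sub>R (\<Sum>k\<in>{1..r}. b k *\<^sub>R Dt m p l k \<zeta>)) has_derivative
        (\<lambda>h. dE0 m p l h + tau *\<^sub>R (\<Sum>k\<in>{1..r}. b k *\<^sub>R dDt m p l k h))) (at \<zeta>0)"
      using dif_E[OF i(1-3)] dDt_i(1)[OF i(1-3)]
      by (intro has_derivative_add has_derivative_scaleR_right has_derivative_sum) auto
    have Yeq: "E1 m p l = (\<lambda>\<zeta>. E0 m p l \<zeta> + tau *\<^sub>R (\<Sum>k\<in>{1..r}. b k *\<^sub>R Dt m p l k \<zeta>))"
      using rk_t_update[OF i] by (intro ext) auto
    have "dE1 m p l = (\<lambda>h. dE0 m p l h + tau *\<^sub>R (\<Sum>k\<in>{1..r}. b k *\<^sub>R dDt m p l k h))"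
      by (rule has_derivative_unique[OF conjunct2[OF dif_E[OF i]] D[folded Yeq]])
    then show ?thesis by simp
  qed
  have dYx: "dY m p l k h = dX0 p l k h + dx *\<^sub>R (\<Sum>n\<in>{1..s}. atl m n *\<^sub>R dDx n p l k h)"
    if i: "m \<in> {1..s}" "p \<in> {1..io}" "l \<in> {1..sg}" "k \<in> {1..r}" for m p l k h
  proof -
    have D: "((\<lambda>\<zeta>. X0 p l k \<zeta> + dx *\<^sub>R (\<Sum>n\<in>{1..s}. atl m n *\<^sub>R Dx n p l k \<zeta>)) has_derivative
        (\<lambda>h. dX0 p l k h + dx *\<^sub>R (\<Sum>n\<in>{1..s}. atl m n *\<^sub>R dDx n p l k h))) (at \<zeta>0)"
      using dif_X[OF i(2-4)] dDt_i(2)[OF _ i(2-4)]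
      by (intro has_derivative_add has_derivative_scaleR_right has_derivative_sum) auto
    have Yeq: "Y m p l k = (\<lambda>\<zeta>. X0 p l k \<zeta> + dx *\<^sub>R (\<Sum>n\<in>{1..s}. atl m n *\<^sub>R Dx n p l k \<zeta>))"
      using rk_x_stage[OF i] by (intro ext) auto
    have "dY m p l k = (\<lambda>h. dX0 p l k h + dx *\<^sub>R (\<Sum>n\<in>{1..s}. atl m n *\<^sub>R dDx n p l k h))"
      by (rule has_derivative_unique[OF dDt_i(5)[OF i] D[folded Yeq]])
    then show ?thesis by simp
  qed
  have dX1: "dX1 p l k h = dX0 p l k h + dx *\<^sub>R (\<Sum>m\<in>{1..s}. bt m *\<^sub>R dDx m p l k h)"
    if i: "p \<in> {1..io}" "l \<in> {1..sg}" "k \<in> {1..r}" for p l k h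
  proof -
    have D: "((\<lambda>\<zeta>. X0 p l k \<zeta> + dx *\<^sub>R (\<Sum>m\<in>{1..s}. bt m *\<^sub>R Dx m p l k \<zeta>)) has_derivative
        (\<lambda>h. dX0 p l k h + dx *\<^sub>R (\<Sum>m\<in>{1..s}. bt m *\<^sub>R dDx m p l k h))) (at \<zeta>0)"
      using dif_X[OF i] dDt_i(2)[OF _ i]
      by (intro has_derivative_add has_derivative_scaleR_right has_derivative_sum) auto
    have Yeq: "X1 p l k = (\<lambda>\<zeta>. X0 p l k \<zeta> + dx *\<^sub>R (\<Sum>m\<in>{1..s}. bt m *\<^sub>R Dx m p l k \<zeta>))"
      using rk_x_update[OF i] by (intro ext) auto
    have "dX1 p l k = (\<lambda>h. dX0 p l k h + dx *\<^sub>R (\<Sum>m\<in>{1..s}. bt m *\<^sub>R dDx m p l k h))"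
      by (rule has_derivative_unique[OF conjunct2[OF dif_X[OF i]] D[folded Yeq]])
    then show ?thesis by simp
  qed
  have dYy: "dY m p l k h = dW0 m l k h + dy *\<^sub>R (\<Sum>q\<in>{1..io}. ab p q *\<^sub>R dDy m q l k h)"
    if i: "m \<in> {1..s}" "p \<in> {1..io}" "l \<in> {1..sg}" "k \<in> {1..r}" for m p l k h
  proof -
    have D: "((\<lambda>\<zeta>. W0 m l k \<zeta> + dy *\<^sub>R (\<Sum>q\<in>{1..io}. ab p q *\<^sub>R Dy m q l k \<zeta>)) has_derivative
        (\<lambda>h. dW0 m l k h + dy *\<^sub>R (\<Sum>q\<in>{1..io}. ab p q *\<^sub>R dDy m q l k h))) (at \<zeta>0)"
      using dif_W[OF i(1) i(3-4)] dDt_i(3)[OF i(1) _ i(3-4)]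
      by (intro has_derivative_add has_derivative_scaleR_right has_derivative_sum) auto
    have Yeq: "Y m p l k = (\<lambda>\<zeta>. W0 m l k \<zeta> + dy *\<^sub>R (\<Sum>q\<in>{1..io}. ab p q *\<^sub>R Dy m q l k \<zeta>))"
      using rk_y_stage[OF i] by (intro ext) auto
    have "dY m p l k = (\<lambda>h. dW0 m l k h + dy *\<^sub>R (\<Sum>q\<in>{1..io}. ab p q *\<^sub>R dDy m q l k h))"
      by (rule has_derivative_unique[OF dDt_i(5)[OF i] D[folded Yeq]])
    then show ?thesis by simp
  qed
  have dW1: "dW1 m l k h = dW0 m l k h + dy *\<^sub>R (\<Sum>p\<in>{1..io}. bb p *\<^sub>R dDy m p l k h)"
    if i: "m \<in> {1..s}" "l \<in> {1..sg}" "k \<in> {1..r}" for m l k h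
  proof -
    have D: "((\<lambda>\<zeta>. W0 m l k \<zeta> + dy *\<^sub>R (\<Sum>p\<in>{1..io}. bb p *\<^sub>R Dy m p l k \<zeta>)) has_derivative
        (\<lambda>h. dW0 m l k h + dy *\<^sub>R (\<Sum>p\<in>{1..io}. bb p *\<^sub>R dDy m p l k h))) (at \<zeta>0)"
      using dif_W[OF i] dDt_i(3)[OF i(1) _ i(2-3)]
      by (intro has_derivative_add has_derivative_scaleR_right has_derivative_sum) auto
    have Yeq: "W1 m l k = (\<lambda>\<zeta>. W0 m l k \<zeta> + dy *\<^sub>R (\<Sum>p\<in>{1..io}. bb p *\<^sub>R Dy m p l k \<zeta>))"
      using rk_y_update[OF i] by (intro ext) auto
    have "dW1 m l k = (\<lambda>h. dW0 m l k h + dy *\<^sub>R (\<Sum>p\<in>{1..io}. bb p *\<^sub>R dDy m p l k h))"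
      by (rule has_derivative_unique[OF conjunct2[OF dif_W[OF i]] D[folded Yeq]])
    then show ?thesis by simp
  qed
  have dYz: "dY m p l k h = dZ0 m p k h + dz *\<^sub>R (\<Sum>v\<in>{1..sg}. ah l v *\<^sub>R dDz m p v k h)"
    if i: "m \<in> {1..s}" "p \<in> {1..io}" "l \<in> {1..sg}" "k \<in> {1..r}" for m p l k h
  proof -
    have D: "((\<lambda>\<zeta>. Z0 m p k \<zeta> + dz *\<^sub>R (\<Sum>v\<in>{1..sg}. ah l v *\<^sub>R Dz m p v k \<zeta>)) has_derivative
        (\<lambda>h. dZ0 m p k h + dz *\<^sub>R (\<Sum>v\<in>{1..sg}. ah l v *\<^sub>R dDz m p v k h))) (at \<zeta>0)"
      using dif_Z[OF i(1-2) i(4)] dDt_i(4)[OF i(1-2) _ i(4)]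
      by (intro has_derivative_add has_derivative_scaleR_right has_derivative_sum) auto
    have Yeq: "Y m p l k = (\<lambda>\<zeta>. Z0 m p k \<zeta> + dz *\<^sub>R (\<Sum>v\<in>{1..sg}. ah l v *\<^sub>R Dz m p v k \<zeta>))"
      using rk_z_stage[OF i] by (intro ext) auto
    have "dY m p l k = (\<lambda>h. dZ0 m p k h + dz *\<^sub>R (\<Sum>v\<in>{1..sg}. ah l v *\<^sub>R dDz m p v k h))"
      by (rule has_derivative_unique[OF dDt_i(5)[OF i] D[folded Yeq]])
    then show ?thesis by simp
  qed
  have dZ1: "dZ1 m p k h = dZ0 m p k h + dz *\<^sub>R (\<Sum>l\<in>{1..sg}. bh l *\<^sub>R dDz m p l k h)"
    if i: "m \<in> {1..s}" "p \<in> {1..io}" "k \<in> {1..r}" for m p k h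
  proof -
    have D: "((\<lambda>\<zeta>. Z0 m p k \<zeta> + dz *\<^sub>R (\<Sum>l\<in>{1..sg}. bh l *\<^sub>R Dz m p l k \<zeta>)) has_derivative
        (\<lambda>h. dZ0 m p k h + dz *\<^sub>R (\<Sum>l\<in>{1..sg}. bh l *\<^sub>R dDz m p l k h))) (at \<zeta>0)"
      using dif_Z[OF i] dDt_i(4)[OF i(1-2) _ i(3)]
      by (intro has_derivative_add has_derivative_scaleR_right has_derivative_sum) auto
    have Yeq: "Z1 m p k = (\<lambda>\<zeta>. Z0 m p k \<zeta> + dz *\<^sub>R (\<Sum>l\<in>{1..sg}. bh l *\<^sub>R Dz m p l k \<zeta>))"
      using rk_z_update[OF i] by (intro ext) (simp add: i)
    have "dZ1 m p k = (\<lambda>h. dZ0 m p k h + dz *\<^sub>R (\<Sum>l\<in>{1..sg}. bh l *\<^sub>R dDz m p l k h))"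
      by (rule has_derivative_unique[OF conjunct2[OF dif_Z[OF i]] D[folded Yeq]])
    then show ?thesis by simp
  qed
  have dstage: "tau *\<^sub>R (Kmat *v dDt m p l k h + L1mat *v dDx m p l k h + L2mat *v dDy m p l k h + L3mat *v dDz m p l k h)
      = (dW m p l k * lam) *\<^sub>R dY m p l k h"
    if i: "m \<in> {1..s}" "p \<in> {1..io}" "l \<in> {1..sg}" "k \<in> {1..r}" for m p l k h
  proof -
    note bl = bounded_linear.has_derivative[OF matrix_vector_mul_bounded_linear]
    have D: "((\<lambda>\<zeta>. tau *\<^sub>R (Kmat *v Dt m p l k \<zeta> + L1mat *v Dx m p l k \<zeta> + L2mat *v Dy m p l k \<zeta> + L3mat *v Dz m p l k \<zeta>)) has_derivative
        (\<lambda>h. tau *\<^sub>R (Kmat *v dDt m p l k h + L1mat *v dDx m p l k h + L2mat *v dDy m p l k h + L3mat *v dDz m p l k h))) (at \<zeta>0)"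
      using dDt_i[OF i]
      by (intro has_derivative_add has_derivative_scaleR_right bl) auto
    have D2: "((\<lambda>\<zeta>. (dW m p l k * lam) *\<^sub>R Y m p l k \<zeta>) has_derivative (\<lambda>h. (dW m p l k * lam) *\<^sub>R dY m p l k h)) (at \<zeta>0)"
      using dDt_i(5)[OF i] by (intro has_derivative_scaleR_right)
    have Seq: "(\<lambda>\<zeta>. tau *\<^sub>R (Kmat *v Dt m p l k \<zeta> + L1mat *v Dx m p l k \<zeta> + L2mat *v Dy m p l k \<zeta> + L3mat *v Dz m p l k \<zeta>))
        = (\<lambda>\<zeta>. (dW m p l k * lam) *\<^sub>R Y m p l k \<zeta>)"
    proof (rule ext)
      fix \<zeta>
      show "tau *\<^sub>R (Kmat *v Dt m p l k \<zeta> + L1mat *v Dx m p l k \<zeta> + L2mat *v Dy m p l k \<zeta> + L3mat *v Dz m p l k \<zeta>)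
        = (dW m p l k * lam) *\<^sub>R Y m p l k \<zeta>"
        using stage_eq[OF i, of \<zeta>] by (simp add: gradS_def scaleR_add_right add.assoc)
    qed
    have "(\<lambda>h. tau *\<^sub>R (Kmat *v dDt m p l k h + L1mat *v dDx m p l k h + L2mat *v dDy m p l k h + L3mat *v dDz m p l k h))
      = (\<lambda>h. (dW m p l k * lam) *\<^sub>R dY m p l k h)"
      by (rule has_derivative_unique[OF D[unfolded Seq] D2])
    then show ?thesis by (rule fun_cong)
  qed
  define qt where "qt m p l k = dDt m p l k u \<bullet> (Kmat *v dY m p l k v) + dY m p l k u \<bullet> (Kmat *v dDt m p l k v)" for m p l k
  define qx where "qx m p l k = dDx m p l k u \<bullet> (L1mat *v dY m p l k v) + dY m p l k u \<bullet> (L1mat *v dDx m p l k v)" for m p l k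
  define qy where "qy m p l k = dDy m p l k u \<bullet> (L2mat *v dY m p l k v) + dY m p l k u \<bullet> (L2mat *v dDy m p l k v)" for m p l k
  define qz where "qz m p l k = dDz m p l k u \<bullet> (L3mat *v dY m p l k v) + dY m p l k u \<bullet> (L3mat *v dDz m p l k v)" for m p l k
  have Ft: "wedge2 Kmat (dE1 m p l) u v - wedge2 Kmat (dE0 m p l) u v = 2 * tau * (\<Sum>k\<in>{1..r}. b k * qt m p l k)"
    if i: "m \<in> {1..s}" "p \<in> {1..io}" "l \<in> {1..sg}" for m p l
  proof -
    have "dE1 m p l u \<bullet> (Kmat *v dE1 m p l v) - dE0 m p l u \<bullet> (Kmat *v dE0 m p l v)
      = tau * (\<Sum>k\<in>{1..r}. b k * (dDt m p l k u \<bullet> (Kmat *v dY m p l k v) + dY m p l k u \<bullet> (Kmat *v dDt m p l k v)))"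
      apply (rule rk_sym[where T="(*v) Kmat" and g="\<lambda>k. dDt m p l k u" and g'="\<lambda>k. dDt m p l k v"
            and y="\<lambda>k. dY m p l k u" and y'="\<lambda>k. dY m p l k v"])
      apply (rule matrix_vector_mul_linear)
      apply (erule (1) cond_t)
      apply (simp add: dE1[OF i])
      apply (simp add: dE1[OF i])
      apply (rule dYt[OF i], simp)
      apply (rule dYt[OF i], simp)
      done
    then show ?thesis by (simp add: wedge2_anti[OF K_anti] qt_def)
  qed
  have Fx: "wedge2 L1mat (dX1 p l k) u v - wedge2 L1mat (dX0 p l k) u v = 2 * dx * (\<Sum>m\<in>{1..s}. bt m * qx m p l k)"
    if i: "p \<in> {1..io}" "l \<in> {1..sg}" "k \<in> {1..r}" for p l k
  proof -
    have "dX1 p l k u \<bullet> (L1mat *v dX1 p l k v) - dX0 p l k u \<bullet> (L1mat *v dX0 p l k v)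
      = dx * (\<Sum>m\<in>{1..s}. bt m * (dDx m p l k u \<bullet> (L1mat *v dY m p l k v) + dY m p l k u \<bullet> (L1mat *v dDx m p l k v)))"
      apply (rule rk_sym[where T="(*v) L1mat" and g="\<lambda>m. dDx m p l k u" and g'="\<lambda>m. dDx m p l k v"
            and y="\<lambda>m. dY m p l k u" and y'="\<lambda>m. dY m p l k v"])
      apply (rule matrix_vector_mul_linear)
      apply (erule (1) cond_x)
      apply (simp add: dX1[OF i])
      apply (simp add: dX1[OF i])
      apply (rule dYx[OF _ i], simp)
      apply (rule dYx[OF _ i], simp)
      done
    then show ?thesis by (simp add: wedge2_anti[OF L1_anti] qx_def)
  qed
  have Fy: "wedge2 L2mat (dW1 m l k) u v - wedge2 L2mat (dW0 m l k) u v = 2 * dy * (\<Sum>p\<in>{1..io}. bb p * qy m p l k)"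
    if i: "m \<in> {1..s}" "l \<in> {1..sg}" "k \<in> {1..r}" for m l k
  proof -
    have "dW1 m l k u \<bullet> (L2mat *v dW1 m l k v) - dW0 m l k u \<bullet> (L2mat *v dW0 m l k v)
      = dy * (\<Sum>p\<in>{1..io}. bb p * (dDy m p l k u \<bullet> (L2mat *v dY m p l k v) + dY m p l k u \<bullet> (L2mat *v dDy m p l k v)))"
      apply (rule rk_sym[where T="(*v) L2mat" and g="\<lambda>p. dDy m p l k u" and g'="\<lambda>p. dDy m p l k v"
            and y="\<lambda>p. dY m p l k u" and y'="\<lambda>p. dY m p l k v"])
      apply (rule matrix_vector_mul_linear)
      apply (erule (1) cond_y)
      apply (simp add: dW1[OF i])
      apply (simp add: dW1[OF i])
      apply (rule dYy[OF i(1) _ i(2-3)], simp)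
      apply (rule dYy[OF i(1) _ i(2-3)], simp)
      done
    then show ?thesis by (simp add: wedge2_anti[OF L2_anti] qy_def)
  qed
  have Fz: "wedge2 L3mat (dZ1 m p k) u v - wedge2 L3mat (dZ0 m p k) u v = 2 * dz * (\<Sum>l\<in>{1..sg}. bh l * qz m p l k)"
    if i: "m \<in> {1..s}" "p \<in> {1..io}" "k \<in> {1..r}" for m p k
  proof -
    have "dZ1 m p k u \<bullet> (L3mat *v dZ1 m p k v) - dZ0 m p k u \<bullet> (L3mat *v dZ0 m p k v)
      = dz * (\<Sum>l\<in>{1..sg}. bh l * (dDz m p l k u \<bullet> (L3mat *v dY m p l k v) + dY m p l k u \<bullet> (L3mat *v dDz m p l k v)))"
      apply (rule rk_sym[where T="(*v) L3mat" and g="\<lambda>l. dDz m p l k u" and g'="\<lambda>l. dDz m p l k v"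
            and y="\<lambda>l. dY m p l k u" and y'="\<lambda>l. dY m p l k v"])
      apply (rule matrix_vector_mul_linear)
      apply (erule (1) cond_z)
      apply (simp add: dZ1[OF i])
      apply (simp add: dZ1[OF i])
      apply (rule dYz[OF i(1-2) _ i(3)], simp)
      apply (rule dYz[OF i(1-2) _ i(3)], simp)
      done
    then show ?thesis by (simp add: wedge2_anti[OF L3_anti] qz_def)
  qed
  have Zero: "qt m p l k + qx m p l k + qy m p l k + qz m p l k = 0"
    if i: "m \<in> {1..s}" "p \<in> {1..io}" "l \<in> {1..sg}" "k \<in> {1..r}" for m p l k
  proof -
    define c where "c = dW m p l k * lam / tau"
    have Sh: "Kmat *v dDt m p l k h + L1mat *v dDx m p l k h + L2mat *v dDy m p l k h + L3mat *v dDz m p l k h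
        = c *\<^sub>R dY m p l k h" for h
    proof -
      have "(1/tau) *\<^sub>R (tau *\<^sub>R (Kmat *v dDt m p l k h + L1mat *v dDx m p l k h + L2mat *v dDy m p l k h + L3mat *v dDz m p l k h))
        = (1/tau) *\<^sub>R ((dW m p l k * lam) *\<^sub>R dY m p l k h)"
        by (simp only: dstage[OF i])
      then show ?thesis using tau_pos by (simp add: c_def)
    qed
    have "qt m p l k + qx m p l k + qy m p l k + qz m p l k
      = dY m p l k u \<bullet> (Kmat *v dDt m p l k v + L1mat *v dDx m p l k v + L2mat *v dDy m p l k v + L3mat *v dDz m p l k v)
      - dY m p l k v \<bullet> (Kmat *v dDt m p l k u + L1mat *v dDx m p l k u + L2mat *v dDy m p l k u + L3mat *v dDz m p l k u)"
      unfolding qt_def qx_def qy_def qz_def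
      by (simp add: inner_anti[OF K_anti, of "dDt m p l k u"] inner_anti[OF L1_anti, of "dDx m p l k u"]
          inner_anti[OF L2_anti, of "dDy m p l k u"] inner_anti[OF L3_anti, of "dDz m p l k u"] inner_add_right)
    also have "... = 0" by (simp only: Sh) (simp add: inner_commute)
    finally show ?thesis .
  qed
  define S4 where "S4 G = (\<Sum>m\<in>{1..s}. \<Sum>p\<in>{1..io}. \<Sum>l\<in>{1..sg}. \<Sum>k\<in>{1..r}. (G m p l k :: real))" for G
  have T1: "((1/2) * (\<Sum>m\<in>{1..s}. \<Sum>p\<in>{1..io}. \<Sum>l\<in>{1..sg}. bt m * bb p * bh l * wedge2 Kmat (dE1 m p l) u v)
     - (1/2) * (\<Sum>m\<in>{1..s}. \<Sum>p\<in>{1..io}. \<Sum>l\<in>{1..sg}. bt m * bb p * bh l * wedge2 Kmat (dE0 m p l) u v)) / tau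
     = S4 (\<lambda>m p l k. b k * bt m * bb p * bh l * qt m p l k)"
  proof -
    have "(\<Sum>m\<in>{1..s}. \<Sum>p\<in>{1..io}. \<Sum>l\<in>{1..sg}. bt m * bb p * bh l * wedge2 Kmat (dE1 m p l) u v)
     - (\<Sum>m\<in>{1..s}. \<Sum>p\<in>{1..io}. \<Sum>l\<in>{1..sg}. bt m * bb p * bh l * wedge2 Kmat (dE0 m p l) u v)
     = (\<Sum>m\<in>{1..s}. \<Sum>p\<in>{1..io}. \<Sum>l\<in>{1..sg}. bt m * bb p * bh l * (wedge2 Kmat (dE1 m p l) u v - wedge2 Kmat (dE0 m p l) u v))"
      by (simp add: sum_subtractf right_diff_distrib)
    also have "... = (\<Sum>m\<in>{1..s}. \<Sum>p\<in>{1..io}. \<Sum>l\<in>{1..sg}. 2 * tau * (\<Sum>k\<in>{1..r}. b k * bt m * bb p * bh l * qt m p l k))"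
      by (intro sum.cong refl) (simp add: Ft sum_distrib_left algebra_simps)
    also have "... = 2 * tau * S4 (\<lambda>m p l k. b k * bt m * bb p * bh l * qt m p l k)"
      by (simp add: S4_def sum_distrib_left)
    finally have AB: "(\<Sum>m\<in>{1..s}. \<Sum>p\<in>{1..io}. \<Sum>l\<in>{1..sg}. bt m * bb p * bh l * wedge2 Kmat (dE1 m p l) u v)
     - (\<Sum>m\<in>{1..s}. \<Sum>p\<in>{1..io}. \<Sum>l\<in>{1..sg}. bt m * bb p * bh l * wedge2 Kmat (dE0 m p l) u v)
     = 2 * tau * S4 (\<lambda>m p l k. b k * bt m * bb p * bh l * qt m p l k)" .
    show ?thesis by (rule half_diff[OF AB tau_pos])
  qed
  have T2: "((1/2) * (\<Sum>k\<in>{1..r}. \<Sum>p\<in>{1..io}. \<Sum>l\<in>{1..sg}. b k * bb p * bh l * wedge2 L1mat (dX1 p l k) u v)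
     - (1/2) * (\<Sum>k\<in>{1..r}. \<Sum>p\<in>{1..io}. \<Sum>l\<in>{1..sg}. b k * bb p * bh l * wedge2 L1mat (dX0 p l k) u v)) / dx
     = S4 (\<lambda>m p l k. b k * bt m * bb p * bh l * qx m p l k)"
  proof -
    have "(\<Sum>k\<in>{1..r}. \<Sum>p\<in>{1..io}. \<Sum>l\<in>{1..sg}. b k * bb p * bh l * wedge2 L1mat (dX1 p l k) u v)
     - (\<Sum>k\<in>{1..r}. \<Sum>p\<in>{1..io}. \<Sum>l\<in>{1..sg}. b k * bb p * bh l * wedge2 L1mat (dX0 p l k) u v)
     = (\<Sum>k\<in>{1..r}. \<Sum>p\<in>{1..io}. \<Sum>l\<in>{1..sg}. b k * bb p * bh l * (wedge2 L1mat (dX1 p l k) u v - wedge2 L1mat (dX0 p l k) u v))"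
      by (simp add: sum_subtractf right_diff_distrib)
    also have "... = (\<Sum>k\<in>{1..r}. \<Sum>p\<in>{1..io}. \<Sum>l\<in>{1..sg}. 2 * dx * (\<Sum>m\<in>{1..s}. b k * bt m * bb p * bh l * qx m p l k))"
      by (intro sum.cong refl) (simp add: Fx sum_distrib_left algebra_simps)
    also have "... = 2 * dx * (\<Sum>k\<in>{1..r}. \<Sum>p\<in>{1..io}. \<Sum>l\<in>{1..sg}. \<Sum>m\<in>{1..s}. b k * bt m * bb p * bh l * qx m p l k)"
      by (simp add: sum_distrib_left)
    also have "(\<Sum>k\<in>{1..r}. \<Sum>p\<in>{1..io}. \<Sum>l\<in>{1..sg}. \<Sum>m\<in>{1..s}. b k * bt m * bb p * bh l * qx m p l k)
       = (\<Sum>k\<in>{1..r}. \<Sum>m\<in>{1..s}. \<Sum>p\<in>{1..io}. \<Sum>l\<in>{1..sg}. b k * bt m * bb p * bh l * qx m p l k)"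
      by (rule sum.cong[OF refl], rule mv3[symmetric])
    also have "... = (\<Sum>m\<in>{1..s}. \<Sum>k\<in>{1..r}. \<Sum>p\<in>{1..io}. \<Sum>l\<in>{1..sg}. b k * bt m * bb p * bh l * qx m p l k)"
      by (rule sum.swap)
    also have "... = S4 (\<lambda>m p l k. b k * bt m * bb p * bh l * qx m p l k)"
      unfolding S4_def by (rule sum.cong[OF refl], rule mv3)
    finally have AB: "(\<Sum>k\<in>{1..r}. \<Sum>p\<in>{1..io}. \<Sum>l\<in>{1..sg}. b k * bb p * bh l * wedge2 L1mat (dX1 p l k) u v)
     - (\<Sum>k\<in>{1..r}. \<Sum>p\<in>{1..io}. \<Sum>l\<in>{1..sg}. b k * bb p * bh l * wedge2 L1mat (dX0 p l k) u v)
     = 2 * dx * S4 (\<lambda>m p l k. b k * bt m * bb p * bh l * qx m p l k)" .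
    show ?thesis by (rule half_diff[OF AB dx_pos])
  qed
  have T3: "((1/2) * (\<Sum>k\<in>{1..r}. \<Sum>m\<in>{1..s}. \<Sum>l\<in>{1..sg}. b k * bt m * bh l * wedge2 L2mat (dW1 m l k) u v)
     - (1/2) * (\<Sum>k\<in>{1..r}. \<Sum>m\<in>{1..s}. \<Sum>l\<in>{1..sg}. b k * bt m * bh l * wedge2 L2mat (dW0 m l k) u v)) / dy
     = S4 (\<lambda>m p l k. b k * bt m * bb p * bh l * qy m p l k)"
  proof -
    have "(\<Sum>k\<in>{1..r}. \<Sum>m\<in>{1..s}. \<Sum>l\<in>{1..sg}. b k * bt m * bh l * wedge2 L2mat (dW1 m l k) u v)
     - (\<Sum>k\<in>{1..r}. \<Sum>m\<in>{1..s}. \<Sum>l\<in>{1..sg}. b k * bt m * bh l * wedge2 L2mat (dW0 m l k) u v)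
     = (\<Sum>k\<in>{1..r}. \<Sum>m\<in>{1..s}. \<Sum>l\<in>{1..sg}. b k * bt m * bh l * (wedge2 L2mat (dW1 m l k) u v - wedge2 L2mat (dW0 m l k) u v))"
      by (simp add: sum_subtractf right_diff_distrib)
    also have "... = (\<Sum>k\<in>{1..r}. \<Sum>m\<in>{1..s}. \<Sum>l\<in>{1..sg}. 2 * dy * (\<Sum>p\<in>{1..io}. b k * bt m * bb p * bh l * qy m p l k))"
      by (intro sum.cong refl) (simp add: Fy sum_distrib_left algebra_simps)
    also have "... = 2 * dy * (\<Sum>k\<in>{1..r}. \<Sum>m\<in>{1..s}. \<Sum>l\<in>{1..sg}. \<Sum>p\<in>{1..io}. b k * bt m * bb p * bh l * qy m p l k)"
      by (simp add: sum_distrib_left)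
    also have "(\<Sum>k\<in>{1..r}. \<Sum>m\<in>{1..s}. \<Sum>l\<in>{1..sg}. \<Sum>p\<in>{1..io}. b k * bt m * bb p * bh l * qy m p l k)
       = (\<Sum>k\<in>{1..r}. \<Sum>m\<in>{1..s}. \<Sum>p\<in>{1..io}. \<Sum>l\<in>{1..sg}. b k * bt m * bb p * bh l * qy m p l k)"
      by (rule sum.cong[OF refl], rule sum.cong[OF refl], rule sum.swap)
    also have "... = (\<Sum>m\<in>{1..s}. \<Sum>k\<in>{1..r}. \<Sum>p\<in>{1..io}. \<Sum>l\<in>{1..sg}. b k * bt m * bb p * bh l * qy m p l k)"
      by (rule sum.swap)
    also have "... = S4 (\<lambda>m p l k. b k * bt m * bb p * bh l * qy m p l k)"
      unfolding S4_def by (rule sum.cong[OF refl], rule mv3)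
    finally have AB: "(\<Sum>k\<in>{1..r}. \<Sum>m\<in>{1..s}. \<Sum>l\<in>{1..sg}. b k * bt m * bh l * wedge2 L2mat (dW1 m l k) u v)
     - (\<Sum>k\<in>{1..r}. \<Sum>m\<in>{1..s}. \<Sum>l\<in>{1..sg}. b k * bt m * bh l * wedge2 L2mat (dW0 m l k) u v)
     = 2 * dy * S4 (\<lambda>m p l k. b k * bt m * bb p * bh l * qy m p l k)" .
    show ?thesis by (rule half_diff[OF AB dy_pos])
  qed
  have T4: "((1/2) * (\<Sum>k\<in>{1..r}. \<Sum>m\<in>{1..s}. \<Sum>p\<in>{1..io}. b k * bt m * bb p * wedge2 L3mat (dZ1 m p k) u v)
     - (1/2) * (\<Sum>k\<in>{1..r}. \<Sum>m\<in>{1..s}. \<Sum>p\<in>{1..io}. b k * bt m * bb p * wedge2 L3mat (dZ0 m p k) u v)) / dz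
     = S4 (\<lambda>m p l k. b k * bt m * bb p * bh l * qz m p l k)"
  proof -
    have "(\<Sum>k\<in>{1..r}. \<Sum>m\<in>{1..s}. \<Sum>p\<in>{1..io}. b k * bt m * bb p * wedge2 L3mat (dZ1 m p k) u v)
     - (\<Sum>k\<in>{1..r}. \<Sum>m\<in>{1..s}. \<Sum>p\<in>{1..io}. b k * bt m * bb p * wedge2 L3mat (dZ0 m p k) u v)
     = (\<Sum>k\<in>{1..r}. \<Sum>m\<in>{1..s}. \<Sum>p\<in>{1..io}. b k * bt m * bb p * (wedge2 L3mat (dZ1 m p k) u v - wedge2 L3mat (dZ0 m p k) u v))"
      by (simp add: sum_subtractf right_diff_distrib)
    also have "... = (\<Sum>k\<in>{1..r}. \<Sum>m\<in>{1..s}. \<Sum>p\<in>{1..io}. 2 * dz * (\<Sum>l\<in>{1..sg}. b k * bt m * bb p * bh l * qz m p l k))"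
      by (intro sum.cong refl) (simp add: Fz sum_distrib_left algebra_simps)
    also have "... = 2 * dz * (\<Sum>k\<in>{1..r}. \<Sum>m\<in>{1..s}. \<Sum>p\<in>{1..io}. \<Sum>l\<in>{1..sg}. b k * bt m * bb p * bh l * qz m p l k)"
      by (simp add: sum_distrib_left)
    also have "... = 2 * dz * (\<Sum>m\<in>{1..s}. \<Sum>k\<in>{1..r}. \<Sum>p\<in>{1..io}. \<Sum>l\<in>{1..sg}. b k * bt m * bb p * bh l * qz m p l k)"
      by (subst sum.swap) (rule refl)
    also have "(\<Sum>m\<in>{1..s}. \<Sum>k\<in>{1..r}. \<Sum>p\<in>{1..io}. \<Sum>l\<in>{1..sg}. b k * bt m * bb p * bh l * qz m p l k) = S4 (\<lambda>m p l k. b k * bt m * bb p * bh l * qz m p l k)"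
      unfolding S4_def by (rule sum.cong[OF refl], rule mv3)
    finally have AB: "(\<Sum>k\<in>{1..r}. \<Sum>m\<in>{1..s}. \<Sum>p\<in>{1..io}. b k * bt m * bb p * wedge2 L3mat (dZ1 m p k) u v)
     - (\<Sum>k\<in>{1..r}. \<Sum>m\<in>{1..s}. \<Sum>p\<in>{1..io}. b k * bt m * bb p * wedge2 L3mat (dZ0 m p k) u v)
     = 2 * dz * S4 (\<lambda>m p l k. b k * bt m * bb p * bh l * qz m p l k)" .
    show ?thesis by (rule half_diff[OF AB dz_pos])
  qed
  have "S4 (\<lambda>m p l k. b k * bt m * bb p * bh l * qt m p l k) + S4 (\<lambda>m p l k. b k * bt m * bb p * bh l * qx m p l k)
      + S4 (\<lambda>m p l k. b k * bt m * bb p * bh l * qy m p l k) + S4 (\<lambda>m p l k. b k * bt m * bb p * bh l * qz m p l k)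
      = S4 (\<lambda>m p l k. b k * bt m * bb p * bh l * (qt m p l k + qx m p l k + qy m p l k + qz m p l k))"
    by (simp add: S4_def sum.distrib[symmetric] distrib_left)
  also have "... = 0" unfolding S4_def by (simp add: Zero)
  finally show "?P u v" using T1 T2 T3 T4 by simp
qed

end
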